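(* Let $A$ be an Archimedean semiprime $f$-algebra which is bounded quasi-inversion closed. Then every intermediate algebra in $A$ (i.e., every subalgebra $B$ of $A$ with $A_b\subseteq B$) is an order ideal of $A$; that is, if $a\in A$, $b\in B$ and $|a|\le |b|$, then $a\in B$.
   Context: An $f$-algebra is a real associative algebra that is a vector lattice with $A_+A_+\subseteq A_+$ and such that $a\wedge b=0$ implies $ac\wedge b=ca\wedge b=0$ for all $c\in A_+$. It is semiprime if $0$ is its only nilpotent element. An element $a\in A$ is quasi-invertible if there is $a^\ast\in A$ with $a+a^\ast=aa^\ast$; $Q(A)$ denotes the set of quasi-invertible elements. $A$ is called bounded quasi-inversion closed if for every $a\in A$, $|a|\le|a^2-a|$ implies $a\in Q(A)$. For $a\in A$, $A(a)=\{x\in A: |x|\le \mu|a| \text{ for some }\mu\in(0,\infty)\}$ is the principal order ideal generated by $a$. An element $a$ is bounded if $a^2\in A(a)$, i.e. $a^2\le\mu|a|$ for some $\mu\in(0,\infty)$; $A_b$ is the set of bounded elements. An intermediate algebra in $A$ is a subalgebra of $A$ containing $A_b$. An order ideal is a solid vector subspace. *)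

theory Defs
  imports Complex_Main "HOL-Library.Lattice_Algebras"
begin

definition f_algebra :: "'a::{real_algebra, lattice_ab_group_add_abs, ordered_real_vector} itself \<Rightarrow> bool" where
  "f_algebra _ \<longleftrightarrow>
     (\<forall>a b::'a. 0 \<le> a \<longrightarrow> 0 \<le> b \<longrightarrow> 0 \<le> a * b) \<and>
     (\<forall>a b c::'a. inf a b = 0 \<longrightarrow> 0 \<le> c \<longrightarrow> inf (a * c) b = 0 \<and> inf (c * a) b = 0)"

definition archimedean_vl :: "'a::{real_algebra, lattice_ab_group_add_abs, ordered_real_vector} itself \<Rightarrow> bool" where
  "archimedean_vl _ \<longleftrightarrow> (\<forall>x y::'a. (\<forall>n::nat. real n *\<^sub>R \<bar>x\<bar> \<le> \<bar>y\<bar>) \<longrightarrow> x = 0)"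

text \<open>Positive powers in a possibly non-unital algebra: \<open>npow n a = a^(n+1)\<close>.\<close>
fun npow :: "nat \<Rightarrow> 'a::semigroup_mult \<Rightarrow> 'a" where
  "npow 0 a = a"
| "npow (Suc n) a = a * npow n a"

definition nilpotent :: "'a::{semigroup_mult, zero} \<Rightarrow> bool" where
  "nilpotent a \<longleftrightarrow> (\<exists>n. npow n a = 0)"

definition semiprime :: "'a::{semigroup_mult, zero} itself \<Rightarrow> bool" where
  "semiprime _ \<longleftrightarrow> (\<forall>a::'a. nilpotent a \<longrightarrow> a = 0)"

definition quasi_invertible :: "'a::ring \<Rightarrow> bool" where
  "quasi_invertible a \<longleftrightarrow> (\<exists>a'. a + a' = a * a')"

definition bounded_qi_closed :: "'a::{real_algebra, lattice_ab_group_add_abs, ordered_real_vector} itself \<Rightarrow> bool" where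
  "bounded_qi_closed _ \<longleftrightarrow> (\<forall>a::'a. \<bar>a\<bar> \<le> \<bar>a * a - a\<bar> \<longrightarrow> quasi_invertible a)"

definition principal_ideal :: "'a::{real_algebra, lattice_ab_group_add_abs, ordered_real_vector} \<Rightarrow> 'a set" where
  "principal_ideal a = {x. \<exists>\<mu>::real. 0 < \<mu> \<and> \<bar>x\<bar> \<le> \<mu> *\<^sub>R \<bar>a\<bar>}"

definition bounded_elems :: "'a::{real_algebra, lattice_ab_group_add_abs, ordered_real_vector} set" where
  "bounded_elems = {a. a * a \<in> principal_ideal a}"

definition subalgebra :: "'a::real_algebra set \<Rightarrow> bool" where
  "subalgebra B \<longleftrightarrow> 0 \<in> B \<and> (\<forall>x\<in>B. \<forall>y\<in>B. x + y \<in> B \<and> x * y \<in> B)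
      \<and> (\<forall>r::real. \<forall>x\<in>B. r *\<^sub>R x \<in> B)"

definition intermediate_algebra :: "'a::{real_algebra, lattice_ab_group_add_abs, ordered_real_vector} set \<Rightarrow> bool" where
  "intermediate_algebra B \<longleftrightarrow> subalgebra B \<and> bounded_elems \<subseteq> B"

definition order_ideal :: "'a::{real_vector, lattice_ab_group_add_abs} set \<Rightarrow> bool" where
  "order_ideal I \<longleftrightarrow> 0 \<in> I \<and> (\<forall>x\<in>I. \<forall>y\<in>I. x + y \<in> I) \<and> (\<forall>r::real. \<forall>x\<in>I. r *\<^sub>R x \<in> I)
      \<and> (\<forall>a b. b \<in> I \<longrightarrow> \<bar>a\<bar> \<le> \<bar>b\<bar> \<longrightarrow> a \<in> I)"

end

theory Submission
  imports Defs
begin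

lemma fa_pos:
  fixes a b :: "'a::{real_algebra, lattice_ab_group_add_abs, ordered_real_vector}"
  assumes "f_algebra TYPE('a)" "0 \<le> a" "0 \<le> b"
  shows "0 \<le> a * b"
  using assms unfolding f_algebra_def by blast

lemma fa_disjR:
  fixes a b c :: "'a::{real_algebra, lattice_ab_group_add_abs, ordered_real_vector}"
  assumes "f_algebra TYPE('a)" "inf a b = 0" "0 \<le> c"
  shows "inf (a * c) b = 0"
  using assms unfolding f_algebra_def by blast

lemma fa_disjL:
  fixes a b c :: "'a::{real_algebra, lattice_ab_group_add_abs, ordered_real_vector}"
  assumes "f_algebra TYPE('a)" "inf a b = 0" "0 \<le> c"
  shows "inf (c * a) b = 0"
  using assms unfolding f_algebra_def by blast

lemma mono_R:
  fixes a b c :: "'a::{real_algebra, lattice_ab_group_add_abs, ordered_real_vector}"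
  assumes "f_algebra TYPE('a)" "a \<le> b" "0 \<le> c"
  shows "a * c \<le> b * c"
proof -
  have "0 \<le> (b - a) * c" using fa_pos[OF assms(1)] assms by simp
  thus ?thesis by (simp add: algebra_simps)
qed

lemma mono_L:
  fixes a b c :: "'a::{real_algebra, lattice_ab_group_add_abs, ordered_real_vector}"
  assumes "f_algebra TYPE('a)" "a \<le> b" "0 \<le> c"
  shows "c * a \<le> c * b"
proof -
  have "0 \<le> c * (b - a)" using fa_pos[OF assms(1)] assms by simp
  thus ?thesis by (simp add: algebra_simps)
qed

lemma prts_disj:
  fixes z :: "'a::lattice_ab_group_add"
  shows "inf (pprt z) (pprt (- z)) = 0"
  by (metis (no_types, lifting) ab_left_minus add_cancel_right_left
    add_inf_distrib_right nprt_def pprt_neg prts)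

lemma pprt_diff_disj:
  fixes X Y :: "'a::lattice_ab_group_add"
  assumes "0 \<le> X" "0 \<le> Y" "inf X Y = 0"
  shows "pprt (X - Y) = X"
proof -
  have "pprt (X - Y) = sup (X + - Y) (Y + - Y)" by (simp add: pprt_def)
  also have "\<dots> = sup X Y + - Y" by (rule add_sup_distrib_right[symmetric])
  also have "sup X Y = X + Y" using add_eq_inf_sup[of X Y] assms(3) by simp
  finally show ?thesis by simp
qed

lemma abs_diff_disj:
  fixes X Y :: "'a::lattice_ab_group_add_abs"
  assumes "0 \<le> X" "0 \<le> Y" "inf X Y = 0"
  shows "\<bar>X - Y\<bar> = X + Y"
proof -
  have 1: "pprt (X - Y) = X" using pprt_diff_disj assms by blast
  have "pprt (Y - X) = Y" using pprt_diff_disj assms inf_commute by metis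
  hence 2: "nprt (X - Y) = - Y" using nprt_neg[of "Y - X"] by simp
  show ?thesis using abs_prts[of "X - Y"] 1 2 by simp
qed

lemma split_prts:
  fixes x :: "'a::lattice_ab_group_add_abs"
  shows "x = pprt x - pprt (- x)" "\<bar>x\<bar> = pprt x + pprt (- x)"
  using prts[of x] abs_prts[of x] pprt_neg[of x] by simp_all

lemma inf0_nonneg:
  fixes P N :: "'a::lattice_ab_group_add"
  assumes "inf P N = 0"
  shows "0 \<le> P" "0 \<le> N"
  using assms by (metis inf.cobounded1, metis inf.cobounded2)

lemma prod_disj_zero:
  fixes P N :: "'a::{real_algebra, lattice_ab_group_add_abs, ordered_real_vector}"
  assumes fa: "f_algebra TYPE('a)" and d: "inf P N = 0"
  shows "P * N = 0" "N * P = 0"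
proof -
  note nn = inf0_nonneg[OF d]
  have "inf (P * N) N = 0" using fa_disjR[OF fa d nn(2)] .
  hence "inf N (P * N) = 0" by (simp add: inf_commute)
  hence "inf (P * N) (P * N) = 0" using fa_disjL[OF fa _ nn(1)] by blast
  thus "P * N = 0" by simp
  have d2: "inf N P = 0" using d by (simp add: inf_commute)
  have "inf (N * P) P = 0" using fa_disjR[OF fa d2 nn(1)] .
  hence "inf P (N * P) = 0" by (simp add: inf_commute)
  hence "inf (N * P) (N * P) = 0" using fa_disjL[OF fa _ nn(2)] by blast
  thus "N * P = 0" by simp
qed

lemma pprt_multL:
  fixes t x :: "'a::{real_algebra, lattice_ab_group_add_abs, ordered_real_vector}"
  assumes fa: "f_algebra TYPE('a)" and t: "0 \<le> t"
  shows "pprt (t * x) = t * pprt x"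
proof -
  define P N where "P = pprt x" and "N = pprt (- x)"
  have d: "inf P N = 0" unfolding P_def N_def by (rule prts_disj)
  have "inf (t * P) N = 0" using fa_disjL[OF fa d t] .
  hence "inf N (t * P) = 0" by (simp add: inf_commute)
  hence d2: "inf (t * N) (t * P) = 0" using fa_disjL[OF fa _ t] by blast
  have "t * x = t * P - t * N" using split_prts(1)[of x] unfolding P_def N_def
    by (metis right_diff_distrib)
  moreover have "0 \<le> t * P" "0 \<le> t * N" using fa_pos[OF fa t] P_def N_def by auto
  ultimately show ?thesis using pprt_diff_disj d2 P_def by (metis inf_commute)
qed

lemma abs_multR:
  fixes b w :: "'a::{real_algebra, lattice_ab_group_add_abs, ordered_real_vector}"
  assumes fa: "f_algebra TYPE('a)" and w: "0 \<le> w"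
  shows "\<bar>b * w\<bar> = \<bar>b\<bar> * w"
proof -
  define P N where "P = pprt b" and "N = pprt (- b)"
  have d: "inf P N = 0" unfolding P_def N_def by (rule prts_disj)
  have "inf (P * w) N = 0" using fa_disjR[OF fa d w] .
  hence "inf N (P * w) = 0" by (simp add: inf_commute)
  hence d2: "inf (N * w) (P * w) = 0" using fa_disjR[OF fa _ w] by blast
  have "b * w = P * w - N * w" using split_prts(1)[of b] unfolding P_def N_def
    by (metis left_diff_distrib)
  moreover have "0 \<le> P * w" "0 \<le> N * w" using fa_pos[OF fa _ w] P_def N_def by auto
  ultimately have "\<bar>b * w\<bar> = P * w + N * w" using abs_diff_disj d2 by (metis inf_commute)
  also have "\<dots> = \<bar>b\<bar> * w" using split_prts(2)[of b] unfolding P_def N_def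
    by (simp add: distrib_right)
  finally show ?thesis .
qed

lemma square_abs:
  fixes b :: "'a::{real_algebra, lattice_ab_group_add_abs, ordered_real_vector}"
  assumes fa: "f_algebra TYPE('a)"
  shows "b * b = \<bar>b\<bar> * \<bar>b\<bar>" "0 \<le> b * b"
proof -
  define P N where "P = pprt b" and "N = pprt (- b)"
  have d: "inf P N = 0" unfolding P_def N_def by (rule prts_disj)
  have z: "P * N = 0" "N * P = 0" using prod_disj_zero[OF fa d] by auto
  have bb: "b * b = P * P + N * N"
    using split_prts(1)[of b] z unfolding P_def N_def
    by (metis (no_types, lifting) add.commute diff_0 diff_minus_eq_add left_diff_distrib
        minus_diff_eq right_diff_distrib diff_zero)
  have "\<bar>b\<bar> * \<bar>b\<bar> = P * P + N * N"
    using split_prts(2)[of b] z unfolding P_def N_def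
    by (simp add: distrib_left distrib_right)
  thus "b * b = \<bar>b\<bar> * \<bar>b\<bar>" using bb by simp
  show "0 \<le> b * b" using bb fa_pos[OF fa] P_def N_def by (simp add: add_nonneg_nonneg)
qed

lemma L1:
  fixes x z :: "'a::{real_algebra, lattice_ab_group_add_abs, ordered_real_vector}"
  assumes fa: "f_algebra TYPE('a)" and x: "0 \<le> x" and h: "0 \<le> z + x * z"
  shows "0 \<le> z"
proof -
  define P N where "P = pprt z" and "N = pprt (- z)"
  have d: "inf P N = 0" unfolding P_def N_def by (rule prts_disj)
  have "0 \<le> x * z - (- z)" using h by (simp add: add.commute)
  hence "- z \<le> x * z" by (simp only: diff_ge_0_iff_ge)
  hence "N \<le> pprt (x * z)" unfolding N_def by (rule pprt_mono)
  also have "\<dots> = x * P" unfolding P_def by (rule pprt_multL[OF fa x])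
  finally have "N \<le> x * P" .
  moreover have "inf (x * P) N = 0" using fa_disjL[OF fa d x] .
  ultimately have "N = 0" using inf_absorb2[of N "x * P"] by simp
  hence "- z \<le> 0" unfolding N_def by (simp only: le_zero_iff_zero_pprt)
  thus ?thesis by (simp only: neg_le_0_iff_le)
qed

lemma L2:
  fixes t y :: "'a::{real_algebra, lattice_ab_group_add_abs, ordered_real_vector}"
  assumes fa: "f_algebra TYPE('a)" and t: "0 \<le> t" and y: "0 \<le> y"
  shows "t * y \<le> y + t * (t * y)"
proof -
  define X where "X = t * y - y"
  define Y where "Y = t * y - t * (t * y)"
  have "Y = t * (- X)" unfolding X_def Y_def by (simp add: algebra_simps)
  hence pY: "pprt Y = t * pprt (- X)" using pprt_multL[OF fa t, of "- X"] by simp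
  have "inf (pprt (- X)) (pprt X) = 0" using prts_disj[of X] by (simp add: inf_commute)
  hence "inf (t * pprt (- X)) (pprt X) = 0" using fa_disjL[OF fa _ t] by blast
  hence "inf (pprt X) (pprt Y) = 0" using pY by (simp add: inf_commute)
  moreover have "inf X Y \<le> inf (pprt X) (pprt Y)"
    by (rule inf_mono) (simp_all add: pprt_def)
  ultimately have "inf X Y \<le> 0" by simp
  moreover have "inf X Y = t * y - sup y (t * (t * y))"
  proof -
    have "inf X Y = t * y + inf (- y) (- (t * (t * y)))" unfolding X_def Y_def
      by (simp only: diff_conv_add_uminus add_inf_distrib_left)
    also have "\<dots> = t * y - sup y (t * (t * y))"
      by (simp only: neg_sup_eq_inf[symmetric] diff_conv_add_uminus)
    finally show ?thesis .
  qed
  ultimately have "t * y - sup y (t * (t * y)) \<le> 0" by metis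
  hence "t * y \<le> sup y (t * (t * y))" by (simp only: diff_le_0_iff_le)
  also have "\<dots> \<le> y + t * (t * y)"
    using y fa_pos[OF fa t fa_pos[OF fa t y]]
    by (simp add: add_increasing add_increasing2)
  finally show ?thesis .
qed

lemma main_pos:
  fixes B :: "'a::{real_algebra, lattice_ab_group_add_abs, ordered_real_vector} set"
  assumes fa: "f_algebra TYPE('a)" and qi: "bounded_qi_closed TYPE('a)"
    and IB: "intermediate_algebra B" and bB: "b \<in> B" and a0: "0 \<le> a" and ab: "a \<le> \<bar>b\<bar>"
  shows "a \<in> B"
proof -
  have sa: "subalgebra B" and bd: "bounded_elems \<subseteq> B" using IB unfolding intermediate_algebra_def by auto
  have clos: "\<And>x y. x \<in> B \<Longrightarrow> y \<in> B \<Longrightarrow> x + y \<in> B \<and> x * y \<in> B"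
    using sa unfolding subalgebra_def by blast
  define t where "t = \<bar>b\<bar>"
  define p where "p = b * b"
  have t0: "0 \<le> t" unfolding t_def by simp
  have ptt: "p = t * t" unfolding p_def t_def using square_abs[OF fa] by blast
  have p0: "0 \<le> p" unfolding p_def using square_abs[OF fa] by blast
  have pp0: "0 \<le> p * p" using fa_pos[OF fa p0 p0] .
  have "\<bar>- p\<bar> \<le> \<bar>(- p) * (- p) - (- p)\<bar>"
  proof -
    have "\<bar>- p\<bar> = p" using p0 by simp
    moreover have "(- p) * (- p) - (- p) = p * p + p" by simp
    moreover have "\<bar>p * p + p\<bar> = p * p + p" using pp0 p0 by simp
    ultimately show ?thesis using pp0 by simp
  qed
  hence "quasi_invertible (- p)" using qi unfolding bounded_qi_closed_def by blast
  then obtain e where he: "- p + e = (- p) * e" unfolding quasi_invertible_def by blast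
  have e: "e + p * e = p"
  proof -
    have "e + p * e = (- p + e) + p * e + p" by (simp add: algebra_simps)
    also have "\<dots> = p" using he by simp
    finally show ?thesis .
  qed
  define w where "w = a - e * a"
  have wa: "w + p * w = a"
  proof -
    have "w + p * w = a + p * a - (e + p * e) * a" unfolding w_def by (simp add: algebra_simps)
    thus ?thesis using e by simp
  qed
  have "0 \<le> w + p * w" using wa a0 by simp
  hence w0: "0 \<le> w" using L1[OF fa p0] by blast
  have tw0: "0 \<le> t * w" using fa_pos[OF fa t0 w0] .
  have ptw: "t * (t * w) = p * w" using ptt by (simp add: mult.assoc)
  have at: "a \<le> t" using ab t_def by simp
  have ww: "w * w \<le> w"
  proof -
    define z where "z = w - w * w"
    have "z + p * z = (w + p * w) - (w + p * w) * w" unfolding z_def by (simp add: algebra_simps)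
    hence zz: "z + p * z = a - a * w" using wa by simp
    have "a * w \<le> t * w" using mono_R[OF fa at w0] .
    also have "\<dots> \<le> w + t * (t * w)" using L2[OF fa t0 w0] .
    also have "\<dots> = a" using ptw wa by simp
    finally have "0 \<le> z + p * z" using zz by simp
    hence "0 \<le> z" using L1[OF fa p0] by blast
    thus ?thesis unfolding z_def by simp
  qed
  have wtw: "w * (t * w) \<le> w"
  proof -
    define z where "z = w - w * (t * w)"
    have "z + p * z = (w + p * w) - (w + p * w) * (t * w)" unfolding z_def by (simp add: algebra_simps)
    hence zz: "z + p * z = a - a * (t * w)" using wa by simp
    have "a * (t * w) \<le> t * (t * w)" using mono_R[OF fa at tw0] .
    also have "\<dots> = p * w" using ptw .
    also have "\<dots> \<le> w + p * w" using w0 by simp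
    also have "\<dots> = a" using wa .
    finally have "0 \<le> z + p * z" using zz by simp
    hence "0 \<le> z" using L1[OF fa p0] by blast
    thus ?thesis unfolding z_def by simp
  qed
  have wbd: "w \<in> bounded_elems"
    unfolding bounded_elems_def principal_ideal_def
  proof (intro CollectI exI conjI)
    show "(0::real) < 1" by simp
    have "0 \<le> w * w" using fa_pos[OF fa w0 w0] .
    thus "\<bar>w * w\<bar> \<le> 1 *\<^sub>R \<bar>w\<bar>" using ww w0 by simp
  qed
  define v where "v = b * w"
  have av: "\<bar>v\<bar> = t * w" unfolding v_def t_def using abs_multR[OF fa w0] .
  have vbd: "v \<in> bounded_elems"
    unfolding bounded_elems_def principal_ideal_def
  proof (intro CollectI exI conjI)
    show "(0::real) < 1" by simp
    have vv: "v * v = (t * w) * (t * w)" using square_abs(1)[OF fa, of v] av by simp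
    have "0 \<le> v * v" using square_abs(2)[OF fa] .
    hence "\<bar>v * v\<bar> = (t * w) * (t * w)" using vv by simp
    also have "\<dots> = t * (w * (t * w))" by (simp add: mult.assoc)
    also have "\<dots> \<le> t * w" using mono_L[OF fa wtw t0] .
    finally show "\<bar>v * v\<bar> \<le> 1 *\<^sub>R \<bar>v\<bar>" using av by simp
  qed
  have "w \<in> B" "v \<in> B" using wbd vbd bd by auto
  hence "w + b * v \<in> B" using clos bB by blast
  moreover have "w + b * v = a" unfolding v_def using wa p_def by (simp add: mult.assoc)
  ultimately show ?thesis by simp
qed

theorem theorem8:
  fixes B :: "'a::{real_algebra, lattice_ab_group_add_abs, ordered_real_vector} set"
  assumes "f_algebra TYPE('a)"
    and "archimedean_vl TYPE('a)"
    and "semiprime TYPE('a)"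
    and "bounded_qi_closed TYPE('a)"
    and "intermediate_algebra B"
  shows "order_ideal B"
proof -
  have sa: "subalgebra B" using assms(5) unfolding intermediate_algebra_def by auto
  have z: "0 \<in> B" and ad: "\<And>x y. x \<in> B \<Longrightarrow> y \<in> B \<Longrightarrow> x + y \<in> B"
    and sc: "\<And>r x. x \<in> B \<Longrightarrow> r *\<^sub>R x \<in> B"
    using sa unfolding subalgebra_def by blast+
  have main: "a \<in> B" if bB: "b \<in> B" and ab: "\<bar>a\<bar> \<le> \<bar>b\<bar>" for a b
  proof -
    have "pprt a \<le> \<bar>a\<bar>" "pprt (- a) \<le> \<bar>a\<bar>" using split_prts(2)[of a] by auto
    hence "pprt a \<le> \<bar>b\<bar>" "pprt (- a) \<le> \<bar>b\<bar>" using ab by auto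
    hence P: "pprt a \<in> B" and N: "pprt (- a) \<in> B"
      using main_pos[OF assms(1) assms(4) assms(5) bB] by auto
    have "pprt a + (- 1) *\<^sub>R pprt (- a) \<in> B" using ad[OF P sc[OF N]] .
    moreover have "pprt a + (- 1) *\<^sub>R pprt (- a) = a" using split_prts(1)[of a] by simp
    ultimately show ?thesis by simp
  qed
  show ?thesis unfolding order_ideal_def using z ad sc main by blast
qed

end
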